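(* Let $(H,\langle\cdot,\cdot\rangle)$ be a real Hilbert space, regarded as an SSD space with bilinear form $\langle\cdot,\cdot\rangle$, so that $q(x)=\frac12\|x\|^2$. A nonempty set $A\subset H$ is $q$-representable if and only if $A$ is closed.
   Context: Every nonempty subset of $H$ is $q$-positive here since $q\ge0$. A nonempty set $A\subset H$ is $q$-representable if there exists a weakly lower semicontinuous (equivalently, since convex, norm lower semicontinuous) proper convex function $f:H\to\mathbb{R}\cup\{+\infty\}$ with $f\ge q$ on $H$ and $\{x: f(x)=q(x)\}=A$. *)

theory Defs
  imports "HOL-Analysis.Analysis"
begin

definition qH :: "'a::real_inner \<Rightarrow> real" where
  "qH x = (x \<bullet> x) / 2"

text \<open>Functions H -> R \<union> {+\<infinity>}, modelled as ereal-valued functions never equal to -\<infinity>.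
  Proper: never -\<infinity> and not identically +\<infinity>.\<close>
definition proper_fun :: "('a \<Rightarrow> ereal) \<Rightarrow> bool" where
  "proper_fun f \<longleftrightarrow> (\<forall>x. f x \<noteq> -\<infinity>) \<and> (\<exists>x. f x \<noteq> \<infinity>)"

text \<open>Convexity for extended-real-valued functions (with the convention 0 * \<infinity> = 0).\<close>
definition ereal_convex :: "('a::real_vector \<Rightarrow> ereal) \<Rightarrow> bool" where
  "ereal_convex f \<longleftrightarrow> (\<forall>x y t. 0 \<le> t \<and> t \<le> 1 \<longrightarrow>
      f ((1 - t) *\<^sub>R x + t *\<^sub>R y) \<le> ereal (1 - t) * f x + ereal t * f y)"

definition lsc_fun :: "('a::topological_space \<Rightarrow> ereal) \<Rightarrow> bool" where
  "lsc_fun f \<longleftrightarrow> (\<forall>c::real. closed {x. f x \<le> ereal c})"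

definition q_representable :: "'a::real_inner set \<Rightarrow> bool" where
  "q_representable A \<longleftrightarrow> (\<exists>f. proper_fun f \<and> ereal_convex f \<and> lsc_fun f \<and>
      (\<forall>x. ereal (qH x) \<le> f x) \<and> {x. f x = ereal (qH x)} = A)"

end

theory Submission
  imports Defs
begin

lemma key: "(y::'a::real_inner) \<bullet> a - qH a = qH y - norm (y - a)^2 / 2"
  unfolding qH_def power2_norm_eq_inner by (simp add: inner_diff_left inner_diff_right inner_commute) (simp add: field_simps)

lemma repr_closed:
  fixes A :: "'a::real_inner set"
  assumes "q_representable A" shows "closed A"
proof -
  obtain f where pf: "proper_fun f" and lsc: "lsc_fun f" and ge: "\<forall>x. ereal (qH x) \<le> f x"
    and eq: "{x. f x = ereal (qH x)} = A"
    using assms unfolding q_representable_def by blast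
  have "open (- A)"
    unfolding open_contains_ball
  proof (intro ballI)
    fix x assume "x \<in> - A"
    hence fx: "f x > ereal (qH x)" using ge eq by (metis (mono_tags, lifting) mem_Collect_eq Compl_iff order_less_le)
    obtain d where d: "d > 0" "ereal (qH x + 2*d) < f x"
    proof (cases "f x")
      case (real r)
      have "qH x + 2 * ((r - qH x)/4) < r" "(r - qH x)/4 > 0" using fx real by (auto simp: field_simps)
      then show ?thesis using that[of "(r - qH x)/4"] real by auto
    next
      case PInf then show ?thesis using that[of 1] by auto
    next
      case MInf then show ?thesis using fx by auto
    qed
    let ?U = "- {y. f y \<le> ereal (qH x + 2*d)} \<inter> {y. qH y < qH x + 2*d}"
    have "open ?U"
      using lsc unfolding lsc_fun_def qH_def
      by (intro open_Int open_Compl) (auto intro!: open_Collect_less continuous_intros)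
    moreover have "x \<in> ?U" using d by auto
    moreover have "?U \<subseteq> - A"
    proof
      fix y assume "y \<in> ?U"
      hence "ereal (qH x + 2*d) < f y" "ereal (qH y) < ereal (qH x + 2*d)" by (auto simp: not_le)
      hence "f y > ereal (qH y)" by (meson order.strict_trans)
      hence "y \<notin> {x. f x = ereal (qH x)}" by auto
      thus "y \<in> - A" using eq by simp
    qed
    ultimately obtain e where "e > 0" "ball x e \<subseteq> ?U"
      using open_contains_ball_eq by metis
    thus "\<exists>e>0. ball x e \<subseteq> - A" using \<open>?U \<subseteq> - A\<close> by blast
  qed
  thus ?thesis by (simp add: closed_def)
qed

lemma closed_repr:
  fixes A :: "'a::real_inner set"
  assumes ne: "A \<noteq> {}" and cl: "closed A"
  shows "q_representable A"
proof -
  define G where "G y = (SUP a\<in>A. y \<bullet> a - qH a)" for y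
  have bdd: "bdd_above ((\<lambda>a. y \<bullet> a - qH a) ` A)" for y :: 'a
    by (rule bdd_aboveI[of _ "qH y"]) (auto simp: key)
  have G_ge: "y \<bullet> a - qH a \<le> G y" if "a \<in> A" for y a
    unfolding G_def using bdd that by (rule cSUP_upper2) auto
  have G_le: "G y \<le> qH y" for y
    unfolding G_def using ne by (intro cSUP_least) (auto simp: key)
  define f where "f x = (SUP y. ereal (x \<bullet> y - G y))" for x
  have f_ge1: "ereal (x \<bullet> y - G y) \<le> f x" for x y
    unfolding f_def by (rule SUP_upper) auto
  have f_ge: "ereal (qH x) \<le> f x" for x
  proof -
    have "qH x \<le> x \<bullet> x - G x" using G_le[of x] by (simp add: qH_def)
    thus ?thesis using f_ge1[of x x] by (meson ereal_less_eq(3) order_trans)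
  qed
  have f_le: "f a \<le> ereal (qH a)" if "a \<in> A" for a
    unfolding f_def
  proof (rule SUP_least)
    fix y
    have "y \<bullet> a - qH a \<le> G y" by (rule G_ge[OF that])
    thus "ereal (a \<bullet> y - G y) \<le> ereal (qH a)" by (simp add: inner_commute)
  qed
  have f_gt: "f x \<noteq> ereal (qH x)" if "x \<notin> A" for x
  proof -
    have "open (- A)" using cl by (simp add: closed_def)
    moreover have "x \<in> - A" using that by simp
    ultimately obtain e where e: "e > 0" "ball x e \<subseteq> - A" by (meson open_contains_ball)
    have "G x \<le> qH x - e^2/2"
      unfolding G_def using ne
    proof (intro cSUP_least)
      fix a assume a: "a \<in> A"
      have "a \<notin> ball x e" using e(2) a by blast
      hence "dist x a \<ge> e" by (simp add: not_less)
      hence "norm (x - a) \<ge> e" by (simp add: dist_norm)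
      hence "e^2 \<le> norm (x - a)^2" using e(1) by (intro power_mono) auto
      hence "qH x - norm (x - a)^2 / 2 \<le> qH x - e^2/2" by simp
      thus "x \<bullet> a - qH a \<le> qH x - e^2/2" by (simp only: key)
    qed auto
    hence "qH x + e^2/2 \<le> x \<bullet> x - G x" by (simp add: qH_def)
    hence "ereal (qH x + e^2/2) \<le> ereal (x \<bullet> x - G x)" by simp
    hence "ereal (qH x + e^2/2) \<le> f x" using f_ge1[of x x] by (rule order_trans)
    moreover have "qH x < qH x + e^2/2" using e by simp
    ultimately have "ereal (qH x) < f x" by (meson ereal_less_eq(3) order_less_le_trans less_ereal.simps(1))
    thus ?thesis by simp
  qed
  have set_eq: "{x. f x = ereal (qH x)} = A"
    using f_ge f_le f_gt by (auto intro: antisym)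
  have proper: "proper_fun f"
    unfolding proper_fun_def
  proof
    show "\<forall>x. f x \<noteq> - \<infinity>" using f_ge by (metis MInfty_neq_ereal(1) ereal_infty_less_eq(2))
    obtain a where "a \<in> A" using ne by auto
    thus "\<exists>x. f x \<noteq> \<infinity>" using f_le by (metis ereal_infty_less_eq(1) PInfty_neq_ereal(1))
  qed
  have lsc: "lsc_fun f"
    unfolding lsc_fun_def
  proof
    fix c :: real
    have "{x. f x \<le> ereal c} = (\<Inter>y. {x. x \<bullet> y - G y \<le> c})"
      unfolding f_def by (auto simp: SUP_le_iff)
    moreover have "closed (\<Inter>y. {x. x \<bullet> y - G y \<le> c})"
      by (intro closed_INT ballI closed_Collect_le continuous_intros)
    ultimately show "closed {x. f x \<le> ereal c}" by simp
  qed
  have conv: "ereal_convex f"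
    unfolding ereal_convex_def
  proof (intro allI impI)
    fix x y and t :: real assume t: "0 \<le> t \<and> t \<le> 1"
    show "f ((1 - t) *\<^sub>R x + t *\<^sub>R y) \<le> ereal (1 - t) * f x + ereal t * f y"
      unfolding f_def[of "(1 - t) *\<^sub>R x + t *\<^sub>R y"]
    proof (rule SUP_least)
      fix z
      have "ereal (((1 - t) *\<^sub>R x + t *\<^sub>R y) \<bullet> z - G z)
          = ereal (1 - t) * ereal (x \<bullet> z - G z) + ereal t * ereal (y \<bullet> z - G z)"
        by (simp add: inner_add_left algebra_simps)
      also have "\<dots> \<le> ereal (1 - t) * f x + ereal t * f y"
        using t by (intro add_mono ereal_mult_left_mono f_ge1) auto
      finally show "ereal (((1 - t) *\<^sub>R x + t *\<^sub>R y) \<bullet> z - G z) \<le> ereal (1 - t) * f x + ereal t * f y" .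
    qed
  qed
  show ?thesis unfolding q_representable_def
    using proper conv lsc f_ge set_eq by blast
qed

theorem mainTheorem19:
  fixes A :: "'a::{real_inner, complete_space} set"
  assumes "A \<noteq> {}"
  shows "q_representable A \<longleftrightarrow> closed A"
  using repr_closed closed_repr assms by blast

end
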